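(* For every integer $n\ge3$, $c_n\ge(\sqrt3/2)^{\varphi(n)}$ (with equality for $n=3$ and $n=6$).
   Context: For $n\ge1$, $\phi_n(X)$ denotes the $n$-th cyclotomic polynomial, of degree $\varphi(n)$ (Euler's totient). For $n\ge3$, $c_n=\inf_{t\in\mathbb R}\phi_n(t)$. *)

theory Defs
  imports "HOL-Analysis.Analysis" "HOL-Number_Theory.Number_Theory"
begin

definition cyclotomic :: "nat \<Rightarrow> complex poly" where
  "cyclotomic n = (\<Prod>k\<in>{k\<in>{1..n}. coprime k n}. [:- cis (2 * pi * real k / real n), 1:])"

text \<open>c_n = inf over real t of phi_n(t); phi_n has real (indeed integer) coefficients,
  so its value at a real point is real and we take the real part.\<close>
definition cyc_inf :: "nat \<Rightarrow> real" where
  "cyc_inf n = (INF t::real. Re (poly (cyclotomic n) (complex_of_real t)))"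

end

theory Submission
  imports Defs
begin


lemma cis_eq_iff: "cis x = cis y \<longleftrightarrow> (\<exists>n::int. x = y + 2 * pi * of_int n)"
proof -
  have e: "\<i> * of_real x = \<i> * of_real y + complex_of_real (real_of_int (2 * n) * pi) * \<i>
        \<longleftrightarrow> x = y + 2 * pi * of_int n" for n :: int
  proof -
    have "\<i> * of_real x = \<i> * of_real y + complex_of_real (real_of_int (2 * n) * pi) * \<i>
        \<longleftrightarrow> \<i> * of_real x = \<i> * of_real (y + 2 * pi * of_int n)"
      by (simp add: algebra_simps)
    also have "\<dots> \<longleftrightarrow> complex_of_real x = complex_of_real (y + 2 * pi * of_int n)"
      by (metis mult_cancel_left complex_i_not_zero)
    also have "\<dots> \<longleftrightarrow> x = y + 2 * pi * of_int n" by (rule of_real_eq_iff)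
    finally show ?thesis .
  qed
  show ?thesis by (simp only: cis_conv_exp exp_eq e)
qed

lemma cis_2pi_int: "cis (x + 2 * pi * of_int n) = cis x"
  using cis_eq_iff by blast

lemma cis_2pi_nat: "cis (x + 2 * pi * real n) = cis x"
  using cis_2pi_int[of x "int n"] by simp

lemma root_fact:
  fixes z :: complex
  assumes q: "q > 0"
  shows "z ^ q - cis a = (\<Prod>j<q. z - cis ((a + 2 * pi * real j) / real q))"
proof -
  define r where "r j = cis ((a + 2 * pi * real j) / real q)" for j :: nat
  define P :: "complex poly" where "P = Polynomial.monom 1 q - [:cis a:]"
  define R :: "complex poly" where "R = (\<Prod>j<q. [:- r j, 1:])"
  have rq: "r j ^ q = cis a" for j
  proof -
    have "r j ^ q = cis (real q * ((a + 2 * pi * real j) / real q))" unfolding r_def by (rule Complex.DeMoivre)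
    also have "real q * ((a + 2 * pi * real j) / real q) = a + 2 * pi * real j" using q by simp
    also have "cis \<dots> = cis a" by (rule cis_2pi_nat)
    finally show ?thesis .
  qed
  have inj: "inj_on r {..<q}"
  proof
    fix i j assume i: "i \<in> {..<q}" and j: "j \<in> {..<q}" and e: "r i = r j"
    then obtain n :: int where n: "(a + 2 * pi * real i)/real q = (a + 2 * pi * real j)/real q + 2*pi * of_int n"
      unfolding r_def cis_eq_iff by blast
    hence "a + 2 * pi * real i = a + 2 * pi * real j + 2*pi * of_int n * real q" using q by (simp add: field_simps)
    hence "2*pi*(real i - real j - of_int n * real q) = 0" by (simp add: algebra_simps)
    hence "real i - real j - of_int n * real q = 0" using pi_gt_zero by simp
    hence "of_int (int i - int j) = (of_int (n * int q) :: real)" by simp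
    hence eq: "int i - int j = n * int q" by (simp only: of_int_eq_iff)
    have "\<bar>int i - int j\<bar> < int q" using i j by auto
    hence lt: "\<bar>n\<bar> * int q < int q" using eq by (simp add: abs_mult)
    have "n = 0"
    proof (rule ccontr)
      assume "n \<noteq> 0" hence "1 \<le> \<bar>n\<bar>" by simp
      hence "1 * int q \<le> \<bar>n\<bar> * int q" by (intro mult_right_mono) auto
      thus False using lt by simp
    qed
    thus "i = j" using eq by simp
  qed
  have degP: "degree P \<le> q" unfolding P_def
    by (intro degree_diff_le) (auto simp: degree_monom_le)
  have cP: "Polynomial.coeff P q = 1" using q by (cases q) (simp_all add: P_def coeff_pCons)
  have degR: "degree R = q" unfolding R_def
    by (subst degree_prod_sum_eq) auto
  have lR: "lead_coeff R = 1" unfolding R_def by (simp add: lead_coeff_prod)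
  have PR: "P = R"
  proof (rule ccontr)
    assume ne: "P \<noteq> R"
    define D where "D = P - R"
    have D0: "D \<noteq> 0" using ne by (simp add: D_def)
    have "degree D \<le> q" unfolding D_def using degP degR by (intro degree_diff_le) auto
    moreover have "Polynomial.coeff D q = 0" using cP lR degR by (simp add: D_def)
    ultimately have dD: "degree D < q"
      using D0 by (metis le_neq_implies_less leading_coeff_0_iff)
    have sub: "r ` {..<q} \<subseteq> {x. poly D x = 0}"
    proof
      fix x assume "x \<in> r ` {..<q}"
      then obtain j where j: "j < q" "x = r j" by auto
      have "poly R x = 0" unfolding R_def poly_prod using j
        by (intro prod_zero) (auto intro!: bexI[of _ j])
      moreover have "poly P x = 0" using j rq by (simp add: P_def poly_monom)
      ultimately show "x \<in> {x. poly D x = 0}" by (simp add: D_def)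
    qed
    have "q = card (r ` {..<q})" using inj by (simp add: card_image)
    also have "\<dots> \<le> card {x. poly D x = 0}" using sub poly_roots_finite[OF D0] by (rule card_mono[rotated])
    also have "\<dots> \<le> degree D" using D0 by (rule card_poly_roots_bound)
    finally show False using dD by simp
  qed
  have "z ^ q - cis a = poly P z" by (simp add: P_def poly_monom)
  also have "\<dots> = poly R z" using PR by simp
  also have "\<dots> = (\<Prod>j<q. z - r j)" by (simp add: R_def poly_prod)
  finally show ?thesis by (simp add: r_def)
qed


definition w :: "nat \<Rightarrow> nat \<Rightarrow> complex" where "w N k = cis (2 * pi * real k / real N)"
definition Phi :: "nat \<Rightarrow> complex \<Rightarrow> complex" where "Phi n z = poly (cyclotomic n) z"

lemma Phi_prod: "Phi n z = (\<Prod>k\<in>totatives n. z - w n k)"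
proof -
  have "{k\<in>{1..n}. coprime k n} = totatives n" by (auto simp: totatives_def)
  thus ?thesis by (simp add: Phi_def cyclotomic_def poly_prod w_def)
qed

lemma w_mod: assumes "N > 0" shows "w N k = w N (k mod N)"
proof -
  have "real k = real (k mod N) + real (k div N) * real N"
    using mod_div_mult_eq[of k N] by (metis of_nat_add of_nat_mult)
  hence "2 * pi * real k / real N = 2 * pi * real (k mod N) / real N + 2 * pi * real (k div N)"
    using assms by (simp add: field_simps)
  thus ?thesis by (simp add: w_def cis_2pi_nat)
qed

lemma w_mult: assumes "q > 0" shows "w (m * q) (q * k) = w m k"
proof -
  have "2 * pi * real (q * k) / real (m * q) = 2 * pi * real k / real m" using assms by (simp add: field_simps)
  thus ?thesis by (simp only: w_def)
qed

lemma w_pow: "w N k ^ q = w N (q * k)"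
proof -
  have "real q * (2 * pi * real k / real N) = 2 * pi * real (q * k) / real N" by simp
  thus ?thesis by (simp only: w_def Complex.DeMoivre)
qed

lemma coprime_add_mult_m: "m \<noteq> 0 \<Longrightarrow> coprime (k + j * (m::nat)) m \<longleftrightarrow> coprime k m"
  by (metis coprime_mod_left_iff mod_mult_self1)

lemma prime_coprime_iff_nat: "prime (q::nat) \<Longrightarrow> coprime x q \<longleftrightarrow> \<not> q dvd x"
  by (metis coprime_commute coprime_common_divisor not_prime_unit dvd_refl prime_imp_coprime)

lemma L1:
  assumes q: "prime q" and m: "m > 0"
  shows "Phi m (z ^ q) = Phi (m * q) z * (if q dvd m then 1 else Phi m z)"
proof -
  have q0: "q > 0" using q prime_gt_0_nat by blast
  define f where "f i = z - w (m*q) i" for i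
  define h where "h = (\<lambda>(k, j). k + j * m)"
  define I where "I = {i. 0 < i \<and> i \<le> m * q \<and> coprime i m}"
  have step1: "z ^ q - w m k = (\<Prod>j<q. f (k + j * m))" for k
  proof -
    have "z ^ q - w m k = (\<Prod>j<q. z - cis ((2 * pi * real k / real m + 2 * pi * real j) / real q))"
      unfolding w_def by (rule root_fact[OF q0])
    also have "\<dots> = (\<Prod>j<q. f (k + j * m))"
    proof (intro prod.cong refl)
      fix j
      have "(2 * pi * real k / real m + 2 * pi * real j) / real q = 2 * pi * real (k + j * m) / real (m * q)"
        using m q0 by (simp add: field_simps)
      thus "z - cis ((2 * pi * real k / real m + 2 * pi * real j) / real q) = f (k + j * m)"
        by (simp add: f_def w_def)
    qed
    finally show ?thesis .
  qed
  have "Phi m (z^q) = (\<Prod>k\<in>totatives m. \<Prod>j<q. f (k + j * m))"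
    by (simp add: Phi_prod step1)
  also have "\<dots> = (\<Prod>p\<in>totatives m \<times> {..<q}. f (h p))"
    by (subst prod.cartesian_product) (simp add: h_def split_def)
  also have "\<dots> = (\<Prod>i\<in>I. f i)"
  proof -
    have key: "j = j'" if "k + j*m = k' + j'*m" "0 < k" "k \<le> m" "0 < k'" "k' \<le> m" for k j k' j' :: nat
    proof (rule ccontr)
      assume "j \<noteq> j'"
      then consider "j < j'" | "j' < j" by linarith
      then show False
      proof cases
        case 1
        hence "(j + 1) * m \<le> j' * m" by (intro mult_right_mono) auto
        hence "j * m + m \<le> j' * m" by (simp add: algebra_simps)
        thus False using that by linarith
      next
        case 2
        hence "(j' + 1) * m \<le> j * m" by (intro mult_right_mono) auto
        hence "j' * m + m \<le> j * m" by (simp add: algebra_simps)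
        thus False using that by linarith
      qed
    qed
    have inj: "inj_on h (totatives m \<times> {..<q})"
    proof (rule inj_onI)
      fix a b assume a: "a \<in> totatives m \<times> {..<q}" and b: "b \<in> totatives m \<times> {..<q}" and e: "h a = h b"
      obtain k j where kj: "a = (k, j)" by (cases a)
      obtain k' j' where kj': "b = (k', j')" by (cases b)
      have "k + j*m = k' + j'*m" using e by (simp add: h_def kj kj')
      moreover have "0 < k" "k \<le> m" "0 < k'" "k' \<le> m" using a b kj kj' by (auto simp: in_totatives_iff)
      ultimately have "j = j'" using key by blast
      with \<open>k + j*m = k' + j'*m\<close> have "k = k'" by simp
      thus "a = b" using \<open>j = j'\<close> kj kj' by simp
    qed
    have img: "h ` (totatives m \<times> {..<q}) = I"
    proof
      show "h ` (totatives m \<times> {..<q}) \<subseteq> I"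
      proof
        fix x assume "x \<in> h ` (totatives m \<times> {..<q})"
        then obtain k j where kj: "k \<in> totatives m" "j < q" "x = k + j * m" by (auto simp: h_def)
        have "(j + 1) * m \<le> q * m" using kj by (intro mult_right_mono) auto
        hence "j * m + m \<le> m * q" by (simp add: algebra_simps)
        moreover have "0 < k" "k \<le> m" "coprime k m" using kj by (auto simp: in_totatives_iff)
        ultimately show "x \<in> I" using kj m by (auto simp: I_def coprime_add_mult_m)
      qed
    next
      show "I \<subseteq> h ` (totatives m \<times> {..<q})"
      proof
        fix i assume i: "i \<in> I"
        define k where "k = (i - 1) mod m + 1"
        define j where "j = (i - 1) div m"
        have i0: "0 < i" "i \<le> m * q" "coprime i m" using i by (auto simp: I_def)
        have ikj: "i = k + j * m"
          using i0 mod_div_mult_eq[of "i - 1" m] by (simp add: k_def j_def)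
        have "k \<le> m" using m by (simp add: k_def Suc_le_eq)
        moreover have "coprime k m" using i0 ikj m coprime_add_mult_m[of m k j] by simp
        ultimately have "k \<in> totatives m" by (simp add: in_totatives_iff k_def)
        moreover have "j < q"
          unfolding j_def using i0 m by (intro less_mult_imp_div_less) (simp add: mult.commute)
        ultimately show "i \<in> h ` (totatives m \<times> {..<q})"
          using ikj by (auto simp: h_def intro!: image_eqI[of _ _ "(k, j)"])
      qed
    qed
    show ?thesis using prod.reindex[OF inj, of f] img by simp
  qed
  also have "\<dots> = Phi (m * q) z * (if q dvd m then 1 else Phi m z)"
  proof -
    have T: "totatives (m*q) \<subseteq> I" by (auto simp: I_def in_totatives_iff)
    have fin: "finite I" unfolding I_def by (rule finite_subset[of _ "{..m*q}"]) auto
    have "(\<Prod>i\<in>I. f i) = (\<Prod>i\<in>I - totatives (m*q). f i) * (\<Prod>i\<in>totatives (m*q). f i)"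
      by (rule prod.subset_diff[OF T fin])
    also have "(\<Prod>i\<in>totatives (m*q). f i) = Phi (m * q) z" by (simp add: Phi_prod f_def)
    also have "(\<Prod>i\<in>I - totatives (m*q). f i) = (if q dvd m then 1 else Phi m z)"
    proof (cases "q dvd m")
      case True
      have e0: "I - totatives (m*q) = {}"
      proof -
        { fix i assume "i \<in> I" "i \<notin> totatives (m*q)"
          hence "coprime i m" "\<not> coprime i q" "0 < i" by (auto simp: I_def in_totatives_iff)
          hence False using True prime_coprime_iff_nat[OF q] by (meson coprime_common_divisor dvd_trans not_prime_unit q) }
        thus ?thesis by blast
      qed
      show ?thesis unfolding e0 using True by simp
    next
      case False
      have cqm: "coprime q m" using False q prime_imp_coprime by blast
      have eq: "I - totatives (m*q) = (\<lambda>k. q * k) ` totatives m"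
      proof
        show "I - totatives (m*q) \<subseteq> (\<lambda>k. q * k) ` totatives m"
        proof
          fix i assume "i \<in> I - totatives (m*q)"
          hence i: "coprime i m" "\<not> coprime i q" "0 < i" "i \<le> m * q" by (auto simp: I_def in_totatives_iff)
          then obtain k where k: "i = q * k" using prime_coprime_iff_nat[OF q] by blast
          have "0 < k" using i k by simp
          moreover have "k \<le> m" using i k q0 by (simp add: mult.commute)
          moreover have "coprime k m" using i k by simp
          ultimately show "i \<in> (\<lambda>k. q * k) ` totatives m" using k by (auto simp: in_totatives_iff)
        qed
      next
        show "(\<lambda>k. q * k) ` totatives m \<subseteq> I - totatives (m*q)"
        proof
          fix i assume "i \<in> (\<lambda>k. q * k) ` totatives m"
          then obtain k where kk: "i = q * k" "k \<in> totatives m" by blast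
          hence k: "i = q * k" "0 < k" "k \<le> m" "coprime k m" by (auto simp: in_totatives_iff)
          have "i \<le> m * q" using k by (simp add: mult.commute)
          moreover have "\<not> coprime i q" using k prime_coprime_iff_nat[OF q] by simp
          ultimately show "i \<in> I - totatives (m*q)"
            using k q0 cqm by (auto simp: I_def in_totatives_iff)
        qed
      qed
      have inj: "inj_on (\<lambda>k. q * k) (totatives m)" using q0 by (auto simp: inj_on_def)
      have "(\<Prod>i\<in>I - totatives (m*q). f i) = (\<Prod>k\<in>totatives m. f (q * k))"
        unfolding eq by (rule prod.reindex[OF inj, unfolded comp_def])
      also have "\<dots> = Phi m z" by (simp add: f_def Phi_prod w_mult q0)
      finally show ?thesis using False by simp
    qed
    finally show ?thesis by (simp add: mult.commute)
  qed
  finally show ?thesis .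
qed


lemma Phi_1: "Phi 1 z = z - 1"
  by (simp add: Phi_prod w_def)

lemma Phi_Suc0: "Phi (Suc 0) z = z - 1"
  using Phi_1 by simp

lemma cnj_w: assumes "k \<le> n" "n > 0" shows "cnj (w n k) = w n (n - k)"
proof -
  have "2 * pi * real (n - k) / real n = - (2 * pi * real k / real n) + 2 * pi * real (1::nat)"
    using assms by (simp add: field_simps of_nat_diff)
  thus ?thesis by (simp only: w_def cis_cnj cis_2pi_nat)
qed

lemma coprime_diff_n: assumes "coprime k (n::nat)" "k \<le> n" shows "coprime (n - k) n"
proof -
  have "gcd (n - k) n = gcd k n" by (rule gcd_diff2_nat[OF assms(2)])
  thus ?thesis using assms(1) by (simp only: coprime_iff_gcd_eq_1)
qed

lemma tot_flip:
  assumes "n \<ge> 2" "a \<in> totatives n"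
  shows "n - a \<in> totatives n" "n - (n - a) = a"
proof -
  have "a < n" using assms totatives_less by simp
  thus "n - (n - a) = a" by simp
  show "n - a \<in> totatives n" using assms \<open>a < n\<close> coprime_diff_n[of a n] by (auto simp: in_totatives_iff)
qed

lemma Phi_cnj: "cnj (Phi n z) = Phi n (cnj z)"
proof (cases "n \<ge> 2")
  case False
  hence "n = 0 \<or> n = 1" by auto
  thus ?thesis
  proof
    assume "n = 0" thus ?thesis by (simp add: Phi_prod)
  next
    assume "n = 1" thus ?thesis by (simp add: Phi_1 Phi_Suc0)
  qed
next
  case True
  have "cnj (Phi n z) = (\<Prod>k\<in>totatives n. cnj z - cnj (w n k))" by (simp add: Phi_prod cnj_prod)
  also have "\<dots> = (\<Prod>k\<in>totatives n. cnj z - w n (n - k))"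
    using True by (intro prod.cong refl) (auto simp: cnj_w totatives_le)
  also have "\<dots> = (\<Prod>k\<in>totatives n. cnj z - w n k)"
    by (rule prod.reindex_bij_witness[of _ "\<lambda>k. n - k" "\<lambda>k. n - k"])
       (auto simp: tot_flip[OF True])
  finally show ?thesis by (simp add: Phi_prod)
qed

lemma Phi_real: "Phi n (of_real t) = of_real (Re (Phi n (of_real t)))"
proof -
  have "cnj (Phi n (of_real t)) = Phi n (of_real t)" by (simp add: Phi_cnj)
  hence "Im (cnj (Phi n (of_real t))) = Im (Phi n (of_real t))" by (rule arg_cong)
  hence "Im (Phi n (of_real t)) = 0" by simp
  thus ?thesis by (simp add: complex_eq_iff)
qed

definition V :: "nat \<Rightarrow> real \<Rightarrow> real" where "V n t = Re (Phi n (of_real t))"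

lemma V_of_real: "complex_of_real (V n t) = Phi n (of_real t)"
  unfolding V_def by (rule Phi_real[symmetric])

lemma L1V:
  assumes q: "prime q" and m: "m > 0"
  shows "V m (t ^ q) = V (m * q) t * (if q dvd m then 1 else V m t)"
proof -
  have "complex_of_real (V m (t ^ q)) = complex_of_real (V (m * q) t * (if q dvd m then 1 else V m t))"
    using L1[OF q m, of "of_real t"] by (simp add: V_of_real)
  thus ?thesis by (simp only: of_real_eq_iff)
qed

lemma Phi_prime: assumes p: "prime p" shows "Phi p z = (\<Sum>j<p. z ^ j)"
proof -
  define Q :: "complex poly" where "Q = (\<Sum>j<p. Polynomial.monom 1 j)"
  have pQ: "poly Q x = (\<Sum>j<p. x ^ j)" for x by (simp add: Q_def poly_sum poly_monom)
  have nd: "\<not> p dvd 1" using p by (meson not_prime_unit)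
  have "poly ([:-1,1:] * cyclotomic p) x = poly ([:-1,1:] * Q) x" for x
  proof -
    have "Phi 1 (x^p) = Phi (1*p) x * Phi 1 x" using L1[OF p, of 1 x] nd by simp
    hence "x^p - 1 = Phi p x * (x - 1)" by (simp add: Phi_Suc0)
    also have "x^p - 1 = (x - 1) * (\<Sum>j<p. x^j)" by (rule power_diff_1_eq)
    finally have "(x - 1) * (\<Sum>j<p. x^j) = Phi p x * (x - 1)" .
    thus ?thesis by (simp add: pQ Phi_def algebra_simps)
  qed
  hence "poly ([:-1,1:] * cyclotomic p) = poly ([:-1,1:] * Q)" by blast
  hence "[:-1,1:] * cyclotomic p = [:-1,1:] * Q" by (simp only: poly_eq_poly_eq_iff)
  moreover have nz: "[:-1,1:] \<noteq> (0::complex poly)" by simp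
  ultimately have "cyclotomic p = Q" by (simp only: mult_left_cancel[OF nz])
  thus ?thesis by (simp add: Phi_def pQ)
qed

lemma V_prime: assumes "prime p" shows "V p t = (\<Sum>j<p. t ^ j)"
proof -
  have "complex_of_real (V p t) = complex_of_real (\<Sum>j<p. t ^ j)"
    by (simp add: V_of_real Phi_prime[OF assms])
  thus ?thesis by (simp only: of_real_eq_iff)
qed


lemma Phi_neg:
  assumes odd: "odd m" and m3: "m \<ge> 3"
  shows "Phi m z * Phi m (- z) = Phi m (z ^ 2)"
proof -
  define T where "T = totatives m"
  define g where "g k = (2 * k) mod m" for k
  have m0: "m > 0" using m3 by simp
  have ev: "even (card T)" using totient_even[of m] m3 by (simp add: T_def totient_def)
  have "Phi m z * Phi m (- z) = (\<Prod>k\<in>T. (z - w m k) * (- z - w m k))"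
    by (simp add: Phi_prod T_def prod.distrib)
  also have "\<dots> = (\<Prod>k\<in>T. (-1) * (z^2 - w m k ^ 2))"
    by (intro prod.cong refl) (simp add: algebra_simps power2_eq_square)
  also have "\<dots> = (-1) ^ card T * (\<Prod>k\<in>T. z^2 - w m k ^ 2)"
    by (simp only: prod.distrib prod_constant)
  also have "(-1 :: complex) ^ card T = 1" using ev by simp
  also have "(\<Prod>k\<in>T. z^2 - w m k ^ 2) = (\<Prod>k\<in>T. z^2 - w m (g k))"
    using m0 by (intro prod.cong refl) (simp add: w_pow g_def w_mod[of m "2 * _"])
  also have "\<dots> = (\<Prod>k\<in>g ` T. z^2 - w m k)"
  proof -
    have "inj_on g T"
    proof (rule inj_onI)
      fix a b assume a: "a \<in> T" and b: "b \<in> T" and e: "g a = g b"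
      have "[2 * a = 2 * b] (mod m)" using e by (simp add: g_def cong_def)
      moreover have "coprime 2 m" using odd by simp
      ultimately have "[a = b] (mod m)" using cong_mult_lcancel_nat[of 2 m a b] by simp
      moreover have "a < m" "b < m" using a b m3 by (auto simp: T_def totatives_less)
      ultimately show "a = b" by (simp add: cong_def)
    qed
    thus ?thesis by (simp add: prod.reindex)
  qed
  also have "g ` T = T"
  proof (rule endo_inj_surj)
    show "finite T" by (simp add: T_def)
    show "g ` T \<subseteq> T"
    proof
      fix x assume "x \<in> g ` T"
      then obtain k where k: "k \<in> T" "x = g k" by auto
      have ck: "coprime (2 * k) m" using k odd by (simp add: T_def in_totatives_iff)
      have "x \<noteq> 0"
      proof
        assume "x = 0"
        hence "m dvd 2 * k" using k by (simp add: g_def mod_eq_0_iff_dvd)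
        hence "is_unit m" using ck coprime_common_divisor dvd_refl by blast
        thus False using m3 by simp
      qed
      moreover have "x \<le> m" using k m0 by (simp add: g_def)
      moreover have "coprime x m" using ck k m0 by (simp add: g_def)
      ultimately show "x \<in> T" by (simp add: T_def in_totatives_iff)
    qed
    show "inj_on g T"
    proof (rule inj_onI)
      fix a b assume a: "a \<in> T" and b: "b \<in> T" and e: "g a = g b"
      have "[2 * a = 2 * b] (mod m)" using e by (simp add: g_def cong_def)
      moreover have "coprime 2 m" using odd by simp
      ultimately have "[a = b] (mod m)" using cong_mult_lcancel_nat[of 2 m a b] by simp
      moreover have "a < m" "b < m" using a b m3 by (auto simp: T_def totatives_less)
      ultimately show "a = b" by (simp add: cong_def)
    qed
  qed
  finally show ?thesis by (simp add: Phi_prod T_def)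
qed

lemma V_neg:
  assumes "odd m" "m \<ge> 3"
  shows "V m t * V m (- t) = V m (t ^ 2)"
proof -
  have "complex_of_real (V m t * V m (- t)) = complex_of_real (V m (t ^ 2))"
    using Phi_neg[OF assms, of "of_real t"] by (simp add: V_of_real)
  thus ?thesis by (simp only: of_real_eq_iff)
qed


lemma palin_aux: "(x::complex) * y = 1 \<Longrightarrow> u * c = 1 \<Longrightarrow> (- u) * x * (y - c) = x - u"
proof -
  assume a: "x * y = 1" "u * c = 1"
  have "(- u) * x * (y - c) = - u * (x * y) + x * (u * c)" by (simp add: algebra_simps)
  thus ?thesis using a by simp
qed

lemma Phi_palin:
  assumes t: "t \<noteq> 0"
  shows "Phi n (of_real t) = Phi n 0 * of_real t ^ totient n * cnj (Phi n (of_real (1 / t)))"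
proof -
  define T where "T = totatives n"
  have wc: "w n k * cnj (w n k) = 1" for k by (simp add: w_def cis_cnj cis_mult)
  have e1: "complex_of_real t * complex_of_real (1/t) = 1" using t by (simp flip: of_real_mult)
  have "Phi n (of_real t) = (\<Prod>k\<in>T. of_real t - w n k)" by (simp add: Phi_prod T_def)
  also have "\<dots> = (\<Prod>k\<in>T. (- w n k) * of_real t * cnj (of_real (1/t) - w n k))"
  proof (intro prod.cong refl)
    fix k
    have "cnj (complex_of_real (1/t) - w n k) = complex_of_real (1/t) - cnj (w n k)"
      by (simp only: complex_cnj_diff complex_cnj_complex_of_real)
    thus "of_real t - w n k = (- w n k) * of_real t * cnj (of_real (1/t) - w n k)"
      using palin_aux[OF e1 wc[of k]] by simp
  qed
  also have "\<dots> = (\<Prod>k\<in>T. - w n k) * of_real t ^ card T * (\<Prod>k\<in>T. cnj (of_real (1/t) - w n k))"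
    by (simp only: prod.distrib prod_constant)
  also have "(\<Prod>k\<in>T. - w n k) = Phi n 0" by (simp add: Phi_prod T_def)
  also have "(\<Prod>k\<in>T. cnj (of_real (1/t) - w n k)) = cnj (Phi n (of_real (1 / t)))"
    by (simp only: Phi_prod T_def cnj_prod)
  finally show ?thesis by (simp only: T_def totient_def)
qed

lemma V_palin:
  assumes t: "t \<noteq> 0"
  shows "V n t = V n 0 * t ^ totient n * V n (1 / t)"
proof -
  have c1: "cnj (Phi n (of_real (1/t))) = complex_of_real (V n (1/t))"
    by (simp only: Phi_cnj complex_cnj_complex_of_real V_of_real)
  have "complex_of_real (V n t) = Phi n (of_real t)" by (rule V_of_real)
  also have "\<dots> = complex_of_real (V n 0) * of_real t ^ totient n * complex_of_real (V n (1/t))"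
    by (simp only: Phi_palin[OF t] c1 V_of_real of_real_0)
  also have "\<dots> = complex_of_real (V n 0 * t ^ totient n * V n (1 / t))"
    by (simp only: of_real_mult of_real_power)
  finally show ?thesis by (simp only: of_real_eq_iff)
qed


definition bb :: real where "bb = sqrt 3 / 2"

lemma bb_pos: "0 < bb" and bb_le1: "bb \<le> 1" and bb_sq: "bb ^ 2 = 3/4"
proof -
  show "0 < bb" by (simp add: bb_def)
  have s: "sqrt 3 ^ 2 = (3::real)" by simp
  show "bb ^ 2 = 3/4" by (simp add: bb_def power_divide s)
  have "bb ^ 2 \<le> 1 ^ 2" using \<open>bb ^ 2 = 3/4\<close> by simp
  thus "bb \<le> 1" by (rule power2_le_imp_le) simp
qed

lemma bb_even: "bb ^ (2 * k) = (3/4) ^ k"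
  by (simp add: power_mult bb_sq)

lemma bb_mono: "N \<le> M \<Longrightarrow> bb ^ M \<le> bb ^ N"
  using bb_pos bb_le1 by (intro power_decreasing) auto

lemma inv_bb_mono: "N \<le> M \<Longrightarrow> (1/bb) ^ N \<le> (1/bb) ^ M"
  using bb_pos bb_le1 by (intro power_increasing) (auto simp: field_simps)

lemma bb_inv: "(1/bb) ^ N = 1 / bb ^ N"
  by (simp add: power_one_over)

lemma key_num:
  assumes p: "prime p" "p \<ge> 3"
  shows "real p * bb ^ ((p - 1) * (p + 1)) \<le> 1"
proof (cases "p \<ge> 5")
  case False
  hence "p = 3 \<or> p = 4" using p by auto
  hence "p = 3" using p by (auto dest: prime_odd_nat)
  moreover have "bb ^ 8 = (3/4)^4" using bb_even[of 4] by simp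
  moreover have "(3/4::real)^4 = 81/256" by (simp add: eval_nat_numeral)
  ultimately show ?thesis by simp
next
  case True
  have "bb ^ ((p - 1) * (p + 1)) \<le> bb ^ (2 * (3 * (p - 1)))"
  proof (rule bb_mono)
    have "6 * (p - 1) \<le> (p + 1) * (p - 1)" using True by (intro mult_right_mono) auto
    thus "2 * (3 * (p - 1)) \<le> (p - 1) * (p + 1)" by (simp add: mult.commute)
  qed
  also have "\<dots> = (3/4) ^ (3 * (p - 1))" by (rule bb_even)
  also have "\<dots> = 1 / (4/3) ^ (3 * (p - 1))" by (simp add: power_one_over[symmetric])
  finally have A: "bb ^ ((p - 1) * (p + 1)) \<le> 1 / (4/3) ^ (3 * (p - 1))" .
  have B0: "1 + real (3 * (p - 1)) * (1/3) \<le> (4/3 :: real) ^ (3 * (p - 1))"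
    using Bernoulli_inequality[of "1/3::real" "3 * (p - 1)"] by simp
  have E: "1 + real (3 * (p - 1)) * (1/3) = real p" using True by (simp add: of_nat_diff field_simps)
  have B: "real p \<le> (4/3) ^ (3 * (p - 1))" using B0 unfolding E .
  have "real p * bb ^ ((p - 1) * (p + 1)) \<le> real p * (1 / (4/3) ^ (3 * (p - 1)))"
    using A by (intro mult_left_mono) auto
  also have "\<dots> \<le> 1" using B by (simp add: field_simps)
  finally show ?thesis .
qed

lemma V_2: "V 2 t = 1 + t"
proof -
  have "(\<Sum>j<2. t ^ j) = 1 + t" by (simp add: numeral_2_eq_2)
  moreover have "prime (2::nat)" by simp
  ultimately show ?thesis using V_prime[of 2 t] by simp
qed

lemma V_3: "V 3 t = 1 + t + t^2"
proof -
  have "(\<Sum>j<3. t ^ j) = 1 + t + t^2" by (simp add: numeral_3_eq_3 power2_eq_square)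
  thus ?thesis using V_prime[of 3 t] by simp
qed

lemma V_5: "V 5 t = 1 + t + t^2 + t^3 + t^4"
proof -
  have "(5::nat) = Suc (Suc (Suc (Suc (Suc 0))))" by simp
  hence "(\<Sum>j<5. t ^ j) = 1 + t + t^2 + t^3 + t^4" by (simp add: eval_nat_numeral)
  moreover have "prime (5::nat)" by simp
  ultimately show ?thesis using V_prime[of 5 t] by simp
qed

lemma Vp_bounds:
  assumes p: "prime p" "odd p"
  shows "0 \<le> t \<Longrightarrow> t \<le> 1 \<Longrightarrow> 1 \<le> V p t \<and> V p t \<le> real p"
    and "-1 \<le> t \<Longrightarrow> t \<le> 0 \<Longrightarrow> 1/2 \<le> V p t \<and> V p t \<le> 1"
proof -
  have p0: "p > 0" using p prime_gt_0_nat by blast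
  define S where "S = (\<Sum>j<p. t ^ j)"
  have VS: "V p t = S" using V_prime[OF p(1)] by (simp add: S_def)
  { assume t: "0 \<le> t" "t \<le> 1"
    have "t ^ 0 \<le> S" unfolding S_def using p0 t by (intro member_le_sum) auto
    moreover have "S \<le> (\<Sum>j<p. 1)" unfolding S_def using t by (intro sum_mono power_le_one) auto
    ultimately show "1 \<le> V p t \<and> V p t \<le> real p" by (simp add: VS)
  }
  { assume t: "-1 \<le> t" "t \<le> 0"
    define s where "s = - t"
    have s: "0 \<le> s" "s \<le> 1" using t by (auto simp: s_def)
    have "t ^ p - 1 = (t - 1) * S" unfolding S_def by (rule power_diff_1_eq)
    moreover have "t ^ p = - (s ^ p)" using p(2) by (simp add: s_def power_minus_odd)
    ultimately have eq: "S * (1 + s) = 1 + s ^ p" by (simp add: s_def algebra_simps)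
    have sp: "s ^ p \<le> s" using s p0 by (metis One_nat_def power_decreasing power_one_right Suc_leI)
    have sp0: "0 \<le> s ^ p" using s by simp
    have pos: "0 < 1 + s" using s by simp
    have "S * (1 + s) \<le> 1 * (1 + s)" using eq sp by simp
    hence "S \<le> 1" using pos by (rule mult_right_le_imp_le)
    moreover have "(1/2) * (1 + s) \<le> S * (1 + s)"
    proof -
      have "(1/2) * (1 + s) = 1/2 + s/2" by simp
      thus ?thesis unfolding eq using sp0 s by linarith
    qed
    hence "1/2 \<le> S" using pos by (rule mult_right_le_imp_le)
    ultimately show "1/2 \<le> V p t \<and> V p t \<le> 1" by (simp add: VS)
  }
qed

lemma V_pp: assumes p: "prime p" and a: "a > 0" shows "V (p ^ a) t = V p (t ^ (p ^ (a - 1)))"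
  using a
proof (induction a arbitrary: t)
  case 0 thus ?case by simp
next
  case (Suc a)
  show ?case
  proof (cases "a = 0")
    case True thus ?thesis by simp
  next
    case False
    have m: "p ^ a > 0" using p prime_gt_0_nat by simp
    have d: "p dvd p ^ a" using False by simp
    have "V (p ^ a) (t ^ p) = V (p ^ a * p) t" using L1V[OF p m, of t] d by simp
    hence "V (p ^ Suc a) t = V (p ^ a) (t ^ p)" by (simp add: mult.commute)
    also have "\<dots> = V p ((t ^ p) ^ (p ^ (a - 1)))" using Suc.IH False by simp
    also have "(t ^ p) ^ (p ^ (a - 1)) = t ^ (p ^ (Suc a - 1))"
      using False by (simp add: power_mult[symmetric]) (metis Suc_pred neq0_conv power_Suc)
    finally show ?thesis .
  qed
qed

lemma PPB:
  assumes p: "prime p" "odd p" and a: "a > 0"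
  shows "0 \<le> t \<Longrightarrow> t \<le> 1 \<Longrightarrow> 1 \<le> V (p^a) t \<and> V (p^a) t \<le> real p"
    and "-1 \<le> t \<Longrightarrow> t \<le> 0 \<Longrightarrow> 1/2 \<le> V (p^a) t \<and> V (p^a) t \<le> 1"
proof -
  define N where "N = p ^ (a - 1)"
  have VN: "V (p^a) t = V p (t ^ N)" using V_pp[OF p(1) a] by (simp add: N_def)
  have oN: "odd N" using p(2) by (simp add: N_def)
  { assume t: "0 \<le> t" "t \<le> 1"
    have "0 \<le> t ^ N" "t ^ N \<le> 1" using t by (auto intro: power_le_one)
    thus "1 \<le> V (p^a) t \<and> V (p^a) t \<le> real p" using Vp_bounds(1)[OF p] VN by simp }
  { assume t: "-1 \<le> t" "t \<le> 0"
    have e: "t ^ N = - ((- t) ^ N)" using oN by (simp add: power_minus_odd)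
    have "0 \<le> (-t) ^ N" "(-t) ^ N \<le> 1" using t by (auto intro: power_le_one)
    hence "-1 \<le> t ^ N" "t ^ N \<le> 0" using e by auto
    thus "1/2 \<le> V (p^a) t \<and> V (p^a) t \<le> 1" using Vp_bounds(2)[OF p] VN by simp }
qed


definition ppow :: "nat \<Rightarrow> bool" where "ppow n \<longleftrightarrow> (\<exists>p a. prime p \<and> a > 0 \<and> n = p ^ a)"

lemma ratio_bounds:
  fixes x y L U :: real
  assumes "L > 0" "L \<le> x" "x \<le> U" "L \<le> y" "y \<le> U"
  shows "L / U \<le> x / y" "x / y \<le> U / L"
proof -
  show "L / U \<le> x / y" using assms by (intro frac_le) auto
  show "x / y \<le> U / L" using assms by (intro frac_le) auto
qed

lemma bb_ratio1: "bb ^ k / (1/bb) ^ k = bb ^ (2 * k)"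
  using bb_pos by (simp add: power_one_over mult_2 power_add)

lemma bb_ratio2: "(1/bb) ^ k / bb ^ k = (1/bb) ^ (2 * k)"
  using bb_pos by (simp add: power_one_over mult_2 power_add)

lemma pow_le1: "-1 \<le> t \<Longrightarrow> t \<le> 1 \<Longrightarrow> -1 \<le> t ^ k \<and> t ^ k \<le> (1::real)"
proof -
  assume "-1 \<le> t" "t \<le> 1"
  hence "\<bar>t\<bar> \<le> 1" by simp
  hence "\<bar>t\<bar> ^ k \<le> 1" by (intro power_le_one) auto
  hence "\<bar>t ^ k\<bar> \<le> 1" by (simp add: power_abs)
  thus ?thesis by (auto simp: abs_le_iff)
qed

lemma odd_pow_nonpos: "odd k \<Longrightarrow> t \<le> 0 \<Longrightarrow> t ^ k \<le> (0::real)"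
proof -
  assume k: "odd k" and t: "t \<le> 0"
  have "t ^ k = - ((- t) ^ k)" using k by (simp add: power_minus_odd)
  moreover have "0 \<le> (- t) ^ k" using t by simp
  ultimately show ?thesis by simp
qed

lemma odd_prime_ge3: "prime (p::nat) \<Longrightarrow> odd p \<Longrightarrow> p \<ge> 3"
proof -
  assume "prime p" "odd p"
  hence "p \<ge> 2" "p \<noteq> 2" using prime_ge_2_nat by auto
  thus ?thesis by simp
qed

lemma MULTI:
  "odd n \<Longrightarrow> n \<ge> 3 \<Longrightarrow> \<not> ppow n \<Longrightarrow> -1 \<le> t \<Longrightarrow> t \<le> 1 \<Longrightarrow>
     bb ^ totient n \<le> V n t \<and> V n t \<le> (1/bb) ^ totient n"
proof (induction n arbitrary: t rule: less_induct)
  case (less n)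
  have n0: "n \<noteq> 0" using less.prems by auto
  have n1: "n \<noteq> 1" using less.prems by auto
  obtain q0 where q0: "prime q0" "q0 dvd n" using prime_factor_nat[OF n1] by blast
  define P where "P = prime_factors n"
  have finP: "finite P" by (simp add: P_def)
  have "q0 \<in> P" using q0 n0 by (simp add: P_def in_prime_factors_iff)
  hence neP: "P \<noteq> {}" by blast
  define q where "q = Max P"
  have "q \<in> P" using finP neP by (simp add: q_def)
  hence q: "prime q" "q dvd n" using n0 by (auto simp: P_def in_prime_factors_iff)
  have qmax: "p \<le> q" if "prime p" "p dvd n" for p
    using that n0 finP by (auto simp: q_def P_def in_prime_factors_iff intro!: Max_ge)
  define m where "m = n div q"
  have nm: "n = m * q" using q(2) by (simp add: m_def)
  have q2: "q \<ge> 2" using q prime_ge_2_nat by blast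
  have modd: "odd m" using less.prems(1) nm by auto
  have qodd: "odd q" using less.prems(1) nm by auto
  have q3: "q \<ge> 3" using odd_prime_ge3 q(1) qodd by blast
  have m0: "m > 0" using n0 nm by auto
  have m1: "m \<noteq> 1"
  proof
    assume "m = 1"
    hence "n = q ^ 1" using nm by simp
    hence "ppow n" unfolding ppow_def using q(1) by blast
    thus False using less.prems(3) by simp
  qed
  have m2: "m \<noteq> 2" using modd by auto
  have m3: "m \<ge> 3" using m0 m1 m2 by linarith
  have mn: "m < n" using nm q2 m0 by simp
  have tq: "-1 \<le> t ^ q" "t ^ q \<le> 1" using pow_le1[OF less.prems(4,5)] by auto
  show ?case
  proof (cases "ppow m")
    case True
    then obtain p a where pa: "prime p" "a > 0" "m = p ^ a" by (auto simp: ppow_def)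
    have pdm: "p dvd m" using pa by (simp add: dvd_power)
    have pdn: "p dvd n" using pdm nm by simp
    have podd: "odd p" using pdn less.prems(1) by (auto elim: oddE dest: dvd_trans[of 2 p n])
    have p3: "p \<ge> 3" using odd_prime_ge3 pa(1) podd by blast
    have "p \<le> q" using qmax pa(1) pdn by blast
    moreover have "p \<noteq> q"
    proof
      assume "p = q"
      hence "n = p ^ Suc a" using nm pa by simp
      hence "ppow n" unfolding ppow_def using pa(1) zero_less_Suc by blast
      thus False using less.prems(3) by simp
    qed
    ultimately have pq: "p + 2 \<le> q" using podd qodd by presburger
    have qndm: "\<not> q dvd m"
    proof
      assume "q dvd m"
      hence "q dvd p" using pa q(1) prime_dvd_power by metis
      hence "q = p" using pa(1) q(1) primes_dvd_imp_eq by blast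
      thus False using \<open>p \<noteq> q\<close> by simp
    qed
    have L: "V m (t ^ q) = V n t * V m t" using L1V[OF q(1) m0, of t] qndm nm by simp
    have bnd: "1 / real p \<le> V n t \<and> V n t \<le> real p"
    proof (cases "0 \<le> t")
      case True
      have "0 \<le> t ^ q" using True by simp
      hence A: "1 \<le> V m (t ^ q) \<and> V m (t ^ q) \<le> real p"
        using PPB(1)[OF pa(1) podd pa(2), of "t ^ q"] tq pa(3) by simp
      have B: "1 \<le> V m t \<and> V m t \<le> real p"
        using PPB(1)[OF pa(1) podd pa(2), of t] True less.prems pa(3) by simp
      have "V n t = V m (t ^ q) / V m t" using L B by (simp add: field_simps)
      thus ?thesis using ratio_bounds[of 1 "V m (t ^ q)" "real p" "V m t"] A B by simp
    next
      case False
      have "t ^ q \<le> 0" using False qodd by (intro odd_pow_nonpos) auto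
      hence A: "1/2 \<le> V m (t ^ q) \<and> V m (t ^ q) \<le> 1"
        using PPB(2)[OF pa(1) podd pa(2), of "t ^ q"] tq pa(3) by simp
      have B: "1/2 \<le> V m t \<and> V m t \<le> 1"
        using PPB(2)[OF pa(1) podd pa(2), of t] False less.prems pa(3) by simp
      have "V n t = V m (t ^ q) / V m t" using L B by (simp add: field_simps)
      hence "1/2 \<le> V n t \<and> V n t \<le> 2"
        using ratio_bounds[of "1/2" "V m (t ^ q)" 1 "V m t"] A B by simp
      moreover have "1 / real p \<le> 1/2" using p3 by (simp add: field_simps)
      moreover have "2 \<le> real p" using p3 by simp
      ultimately show ?thesis by linarith
    qed
    have cop: "coprime m q" using qndm q(1) prime_imp_coprime coprime_commute by blast
    have "totient n = totient (p ^ a) * totient q" using nm cop pa(3) by (simp add: totient_mult_coprime)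
    also have "\<dots> = p ^ (a - 1) * (p - 1) * (q - 1)" using pa q(1) by (simp add: totient_prime_power totient_prime)
    finally have tn: "totient n = p ^ (a - 1) * (p - 1) * (q - 1)" .
    have "(p - 1) * (p + 1) \<le> p ^ (a - 1) * (p - 1) * (q - 1)"
    proof -
      have "1 \<le> p" using prime_gt_0_nat[OF pa(1)] by simp
      hence "1 \<le> p ^ (a - 1)" by (rule one_le_power)
      hence "1 * (p - 1) \<le> p ^ (a - 1) * (p - 1)" by (intro mult_right_mono) auto
      moreover have "p + 1 \<le> q - 1" using pq by simp
      ultimately show ?thesis by (intro mult_le_mono) auto
    qed
    hence "bb ^ totient n \<le> bb ^ ((p - 1) * (p + 1))" using tn by (intro bb_mono) simp
    hence kn: "real p * bb ^ totient n \<le> 1"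
      using key_num[OF pa(1) p3] by (meson less_eq_real_def mult_left_mono of_nat_0_le_iff order_trans)
    have bpos: "0 < bb ^ totient n" using bb_pos by simp
    have p0: "0 < real p" using p3 by simp
    have "bb ^ totient n \<le> 1 / real p" using kn p0 by (simp add: field_simps)
    moreover have "real p \<le> (1/bb) ^ totient n" using kn bpos by (simp add: bb_inv field_simps)
    ultimately show ?thesis using bnd by linarith
  next
    case False
    have IHm: "bb ^ totient m \<le> V m s \<and> V m s \<le> (1/bb) ^ totient m" if "-1 \<le> s" "s \<le> 1" for s
      using less.IH[OF mn modd m3 False that] .
    have bpos: "0 < bb ^ totient m" using bb_pos by simp
    show ?thesis
    proof (cases "q dvd m")
      case True
      have e: "V m (t ^ q) = V n t" using L1V[OF q(1) m0, of t] True nm by simp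
      have "totient m \<le> totient n" using nm n0 by (intro totient_dvd_mono) auto
      hence "bb ^ totient n \<le> bb ^ totient m" "(1/bb) ^ totient m \<le> (1/bb) ^ totient n"
        by (auto intro: bb_mono inv_bb_mono)
      thus ?thesis using IHm[OF tq] e by linarith
    next
      case False
      have L: "V m (t ^ q) = V n t * V m t" using L1V[OF q(1) m0, of t] False nm by simp
      have A: "bb ^ totient m \<le> V m (t ^ q) \<and> V m (t ^ q) \<le> (1/bb) ^ totient m" using IHm[OF tq] .
      have B: "bb ^ totient m \<le> V m t \<and> V m t \<le> (1/bb) ^ totient m" using IHm less.prems by blast
      have "V n t = V m (t ^ q) / V m t" using L B bpos by (simp add: field_simps)
      hence r: "bb ^ (2 * totient m) \<le> V n t \<and> V n t \<le> (1/bb) ^ (2 * totient m)"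
        using ratio_bounds[OF bpos, of "V m (t ^ q)" "(1/bb) ^ totient m" "V m t"] A B
        by (simp add: bb_ratio1 bb_ratio2)
      have cop: "coprime m q" using False q(1) prime_imp_coprime coprime_commute by blast
      have "totient n = totient m * (q - 1)" using nm cop q(1) by (simp add: totient_mult_coprime totient_prime)
      moreover have "totient m * 2 \<le> totient m * (q - 1)" using q3 by (intro mult_left_mono) auto
      ultimately have "2 * totient m \<le> totient n" by simp
      hence "bb ^ totient n \<le> bb ^ (2 * totient m)" "(1/bb) ^ (2 * totient m) \<le> (1/bb) ^ totient n"
        by (auto intro: bb_mono inv_bb_mono)
      thus ?thesis using r by linarith
    qed
  qed
qed

lemma ODDALL:
  assumes n: "odd n" "n \<ge> 3" and t: "-1 \<le> t" "t \<le> 1"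
  shows "bb ^ totient n \<le> V n t"
proof (cases "ppow n")
  case False thus ?thesis using MULTI n t by blast
next
  case True
  then obtain p a where pa: "prime p" "a > 0" "n = p ^ a" by (auto simp: ppow_def)
  have pdn: "p dvd n" using pa by (simp add: dvd_power)
  have podd: "odd p" using pdn n(1) by (auto elim: oddE dest: dvd_trans[of 2 p n])
  have p3: "p \<ge> 3" using odd_prime_ge3 pa(1) podd by blast
  have half: "1/2 \<le> V n t"
  proof (cases "0 \<le> t")
    case True thus ?thesis using PPB(1)[OF pa(1) podd pa(2), of t] t pa(3) by simp
  next
    case False thus ?thesis using PPB(2)[OF pa(1) podd pa(2), of t] t pa(3) by simp
  qed
  consider "a = 1 \<and> p = 3" | "a = 1 \<and> p = 5" | "\<not> (a = 1 \<and> p = 3)" "\<not> (a = 1 \<and> p = 5)" by blast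
  then show ?thesis
  proof cases
    case 1
    hence n3: "n = 3" using pa by simp
    have "totient 3 = 2" using totient_prime[of 3] by simp
    moreover have "bb ^ 2 = 3/4" by (rule bb_sq)
    moreover have "3/4 \<le> V 3 t"
    proof -
      have "V 3 t = 3/4 + (t + 1/2)^2" unfolding V_3 by (simp add: power2_eq_square field_simps)
      thus ?thesis by simp
    qed
    ultimately show ?thesis using n3 by simp
  next
    case 2
    hence n5: "n = 5" using pa by simp
    have "totient 5 = 4" using totient_prime[of 5] by simp
    moreover have "bb ^ 4 = 9/16" using bb_even[of 2] by (simp add: power2_eq_square)
    moreover have "9/16 \<le> V 5 t"
    proof -
      have "12 * V 5 t = 8 + 3 * (2 * t^2 + t)^2 + (3 * t + 2)^2" unfolding V_5 by (simp add: eval_nat_numeral algebra_simps)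
      moreover have "0 \<le> (2 * t^2 + t)^2" "0 \<le> (3 * t + 2)^2" by simp_all
      ultimately show ?thesis by linarith
    qed
    ultimately show ?thesis using n5 by simp
  next
    case 3
    have tn: "totient n = p ^ (a - 1) * (p - 1)" using pa by (simp add: totient_prime_power)
    have "6 \<le> p ^ (a - 1) * (p - 1)"
    proof (cases "a = 1")
      case True
      hence "p \<noteq> 3" "p \<noteq> 5" using 3 by auto
      moreover have "p \<noteq> 4" "p \<noteq> 6" using podd by auto
      ultimately have "p \<ge> 7" using p3 by linarith
      thus ?thesis using True by simp
    next
      case False
      hence "a - 1 \<ge> 1" using pa by simp
      hence "p ^ 1 \<le> p ^ (a - 1)" using p3 by (intro power_increasing) auto
      hence "3 \<le> p ^ (a - 1)" using p3 by simp
      moreover have "2 \<le> p - 1" using p3 by simp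
      ultimately have "3 * 2 \<le> p ^ (a - 1) * (p - 1)" by (intro mult_le_mono) auto
      thus ?thesis by simp
    qed
    hence "bb ^ totient n \<le> bb ^ (2 * 3)" using tn by (intro bb_mono) simp
    also have "\<dots> = 27/64" using bb_even[of 3] by (simp add: eval_nat_numeral)
    also have "\<dots> \<le> 1/2" by simp
    finally show ?thesis using half by linarith
  qed
qed

lemma V_double:
  assumes m: "odd m" "m \<ge> 3" and nz: "V m t \<noteq> 0"
  shows "V (2 * m) t = V m (- t)"
proof -
  have m0: "m > 0" using m by simp
  have p2: "prime (2::nat)" by simp
  have "\<not> 2 dvd m" using m by simp
  hence L: "V m (t ^ 2) = V (m * 2) t * V m t" using L1V[OF p2 m0, of t] by simp
  have N: "V m t * V m (- t) = V m (t ^ 2)" by (rule V_neg[OF m])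
  have "V m t * V m (- t) = V m t * V (2 * m) t" using L N by (simp add: mult.commute)
  thus ?thesis using nz by simp
qed

lemma FINAL: "n \<ge> 3 \<Longrightarrow> -1 \<le> t \<Longrightarrow> t \<le> 1 \<Longrightarrow> bb ^ totient n \<le> V n t"
proof (induction n arbitrary: t rule: less_induct)
  case (less n)
  show ?case
  proof (cases "odd n")
    case True thus ?thesis using ODDALL less.prems by blast
  next
    case False
    then obtain m where nm: "n = 2 * m" by (auto elim: evenE)
    have m2: "m \<ge> 2" using less.prems nm by simp
    have m0: "m > 0" using m2 by simp
    have p2: "prime (2::nat)" by simp
    have tt: "-1 \<le> t ^ 2" "t ^ 2 \<le> 1" using pow_le1[OF less.prems(2,3)] by auto
    show ?thesis
    proof (cases "odd m")
      case True
      have m3: "m \<ge> 3" using m2 True by (cases "m = 2") auto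
      have pos: "V m t > 0" using ODDALL[OF True m3 less.prems(2,3)] bb_pos
        by (meson less_le_trans zero_less_power)
      have "V n t = V m (- t)" using V_double[OF True m3] pos nm by simp
      moreover have "bb ^ totient m \<le> V m (- t)" using ODDALL[OF True m3] less.prems by simp
      moreover have "totient n = totient m" using nm True by (simp add: totient_double)
      ultimately show ?thesis by simp
    next
      case False
      hence "2 dvd m" by simp
      hence L: "V m (t ^ 2) = V n t" using L1V[OF p2 m0, of t] nm by (simp add: mult.commute)
      show ?thesis
      proof (cases "m = 2")
        case True
        have "V n t = 1 + t ^ 2" using L True V_2 by simp
        moreover have "bb ^ totient n \<le> 1" using bb_pos bb_le1 by (intro power_le_one) auto
        moreover have "0 \<le> t ^ 2" by simp
        ultimately show ?thesis by linarith
      next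
        case False
        hence m3: "m \<ge> 3" using m2 by simp
        have mn: "m < n" using nm m0 by simp
        have "bb ^ totient m \<le> V m (t ^ 2)" using less.IH[OF mn m3 tt] .
        moreover have "totient n = 2 * totient m" using nm \<open>even m\<close> by (simp add: totient_double)
        hence "bb ^ totient n \<le> bb ^ totient m" by (intro bb_mono) simp
        ultimately show ?thesis using L by linarith
      qed
    qed
  qed
qed


lemma norm_Phi0: "norm (Phi n 0) = 1"
  by (simp add: Phi_prod prod_norm[symmetric] w_def)

lemma V0: assumes "n \<ge> 3" shows "V n 0 = 1"
proof -
  have "bb ^ totient n \<le> V n 0" using FINAL[OF assms] by simp
  hence pos: "V n 0 > 0" using bb_pos by (meson less_le_trans zero_less_power)
  have "norm (complex_of_real (V n 0)) = norm (Phi n 0)" using V_of_real[of n 0] by simp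
  hence "\<bar>V n 0\<bar> = 1" using norm_Phi0[of n] by simp
  thus ?thesis using pos by simp
qed

lemma ALLT: assumes n: "n \<ge> 3" shows "bb ^ totient n \<le> V n t"
proof (cases "\<bar>t\<bar> \<le> 1")
  case True thus ?thesis using FINAL[OF n, of t] by (simp add: abs_le_iff)
next
  case False
  hence t0: "t \<noteq> 0" and ta: "1 < \<bar>t\<bar>" by auto
  have "\<bar>1/t\<bar> \<le> 1" using ta by (simp add: field_simps)
  hence "-1 \<le> 1/t \<and> 1/t \<le> 1" unfolding abs_le_iff by linarith
  hence B: "bb ^ totient n \<le> V n (1/t)" using FINAL[OF n, of "1/t"] by blast
  have ev: "even (totient n)" using totient_even n by simp
  have "1 \<le> \<bar>t\<bar> ^ totient n" using ta by (intro one_le_power) simp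
  hence T: "1 \<le> t ^ totient n" using ev by (simp add: power_even_abs)
  have e: "V n t = t ^ totient n * V n (1/t)" using V_palin[OF t0, of n] V0[OF n] by simp
  have "0 \<le> V n (1/t)" using B bb_pos by (meson less_le_trans zero_less_power less_imp_le)
  hence "1 * V n (1/t) \<le> t ^ totient n * V n (1/t)" using T by (intro mult_right_mono) auto
  thus ?thesis using B e by simp
qed

lemma cyc_inf_V: "cyc_inf n = (INF t. V n t)"
  by (simp add: cyc_inf_def V_def Phi_def)

theorem proposition4p3:
  shows "(\<forall>n::nat. n \<ge> 3 \<longrightarrow> cyc_inf n \<ge> (sqrt 3 / 2) ^ totient n)
         \<and> cyc_inf 3 = (sqrt 3 / 2) ^ totient 3
         \<and> cyc_inf 6 = (sqrt 3 / 2) ^ totient 6"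
proof -
  have sq: "sqrt 3 / 2 = bb" by (simp add: bb_def)
  have lower: "bb ^ totient n \<le> cyc_inf n" if "n \<ge> 3" for n
    unfolding cyc_inf_V by (rule cINF_greatest) (auto intro: ALLT[OF that])
  have bdd: "bdd_below (range (V n))" if "n \<ge> 3" for n
    using ALLT[OF that] by (intro bdd_belowI2)
  have t3: "totient 3 = 2" using totient_prime[of 3] by simp
  have v3: "V 3 (-1/2) = 3/4" by (simp add: V_3 power2_eq_square)
  have c3: "cyc_inf 3 = bb ^ totient 3"
  proof (rule antisym)
    have "cyc_inf 3 \<le> V 3 (-1/2)" unfolding cyc_inf_V by (rule cINF_lower[OF bdd]) simp_all
    thus "cyc_inf 3 \<le> bb ^ totient 3" using v3 t3 bb_sq by simp
    show "bb ^ totient 3 \<le> cyc_inf 3" by (rule lower) simp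
  qed
  have v6: "V 6 (1/2) = 3/4"
  proof -
    have "V (2*3) (1/2) = V 3 (-(1/2))" by (rule V_double) (simp_all add: V_3 power2_eq_square)
    thus ?thesis by (simp add: V_3 power2_eq_square)
  qed
  have c6: "cyc_inf 6 = bb ^ totient 6"
  proof (rule antisym)
    have "cyc_inf 6 \<le> V 6 (1/2)" unfolding cyc_inf_V by (rule cINF_lower[OF bdd]) simp_all
    thus "cyc_inf 6 \<le> bb ^ totient 6" using v6 bb_sq by simp
    show "bb ^ totient 6 \<le> cyc_inf 6" by (rule lower) simp
  qed
  show ?thesis unfolding sq using lower c3 c6 by auto
qed


end
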